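(* Let $(\Omega,\mathscr{F},\mu)$ be a complete probability space, $K\subset L^{0}(\mu)$ absolutely convex, closed in probability and bounded in probability, and $E_K=\mathrm{span}(K)$. Let $\tau$ be a locally convex equicontinuous Köthe topology on $E_K$ with the Krein-Šmulian property which is $F$-regular. Then for every $g\in F$ the set $\{fg:f\in K\}$ is uniformly $\mu$-integrable.
   Context: $L^{0}(\mu)$ carries the topology of convergence in probability. The polar of $C\subset L^{0}(\mu)$ is $C^{\circ}=\{g\in L^{0}(\mu):\sup_{f\in C}\int_\Omega|fg|\,d\mu\leq1\}$; set $E'_K=\mathrm{span}(K^{\circ})$, paired with $E_K$ via $\langle f,g\rangle=\int_\Omega fg\,d\mu$; for $F\subset E'_K$, $\sigma(E_K,F)$ is the associated weak topology on $E_K$. A set is $K$-bounded if it lies in $\lambda K$ for some $\lambda>0$. A topology $\tau$ on $E_K$ is an equicontinuous Köthe topology if $K$ is $\tau$-compact and $\tau$ restricted to $K$-bounded sets equals $\sigma(E_K,F)$ for some $F\subset E'_K$ that is solid, separates the points of $E_K$, and contains a strictly positive element; $F$ is then said to induce $\tau$. Such $\tau$ has the Krein-Šmulian property if a convex set $C\subset E_K$ is $\tau$-closed iff $C\cap\lambda K$ is $\tau$-closed for each $\lambda>0$. Under the Krein-Šmulian property, each $g\in F$ gives a $\tau$-continuous functional $f\mapsto\int_\Omega fg\,d\mu$, yielding a natural map $F\to(E_K,\tau)^{\ast}$; $\tau$ is $F$-regular if $F$ induces $\tau$ and this map is surjective. *)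

theory Defs
  imports "HOL-Probability.Probability"
begin

text \<open>Elements of L0(mu) are represented by real-valued measurable functions; sets of
  L0-elements are represented by sets of representatives that are saturated under
  a.e. equality, topologies on subsets of L0 by topologies whose open sets are saturated.\<close>

definition ae_saturated :: "'a measure \<Rightarrow> ('a \<Rightarrow> real) set \<Rightarrow> bool" where
  "ae_saturated M S \<longleftrightarrow> S \<subseteq> borel_measurable M \<and>
     (\<forall>f\<in>S. \<forall>h\<in>borel_measurable M. (AE x in M. h x = f x) \<longrightarrow> h \<in> S)"

definition lin_span :: "('a \<Rightarrow> real) set \<Rightarrow> ('a \<Rightarrow> real) set" where
  "lin_span S = {f. \<exists>(I::nat set) c v. finite I \<and> v ` I \<subseteq> S \<and> f = (\<lambda>x. \<Sum>i\<in>I. c i * v i x)}"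

definition L0_span :: "'a measure \<Rightarrow> ('a \<Rightarrow> real) set \<Rightarrow> ('a \<Rightarrow> real) set" where
  "L0_span M S = {h \<in> borel_measurable M. \<exists>f\<in>lin_span S. AE x in M. h x = f x}"

definition E_K :: "'a measure \<Rightarrow> ('a \<Rightarrow> real) set \<Rightarrow> ('a \<Rightarrow> real) set" where
  "E_K M K = L0_span M K"

definition polar :: "'a measure \<Rightarrow> ('a \<Rightarrow> real) set \<Rightarrow> ('a \<Rightarrow> real) set" where
  "polar M C = {g \<in> borel_measurable M. \<forall>f\<in>C. (\<integral>\<^sup>+x. ennreal \<bar>f x * g x\<bar> \<partial>M) \<le> 1}"

definition E'_K :: "'a measure \<Rightarrow> ('a \<Rightarrow> real) set \<Rightarrow> ('a \<Rightarrow> real) set" where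
  "E'_K M K = L0_span M (polar M K)"

definition pairing :: "'a measure \<Rightarrow> ('a \<Rightarrow> real) \<Rightarrow> ('a \<Rightarrow> real) \<Rightarrow> real" where
  "pairing M f g = (\<integral>x. f x * g x \<partial>M)"

definition conv_in_prob :: "'a measure \<Rightarrow> (nat \<Rightarrow> 'a \<Rightarrow> real) \<Rightarrow> ('a \<Rightarrow> real) \<Rightarrow> bool" where
  "conv_in_prob M fs f \<longleftrightarrow>
     (\<forall>e>0. (\<lambda>n. measure M {x \<in> space M. e < \<bar>fs n x - f x\<bar>}) \<longlonglongrightarrow> 0)"

text \<open>Closed for the (metrizable) topology of convergence in probability.\<close>
definition closed_in_prob :: "'a measure \<Rightarrow> ('a \<Rightarrow> real) set \<Rightarrow> bool" where
  "closed_in_prob M K \<longleftrightarrow> (\<forall>fs f. (\<forall>n. fs n \<in> K) \<and> f \<in> borel_measurable M \<and> conv_in_prob M fs f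
       \<longrightarrow> f \<in> K)"

definition bounded_in_prob :: "'a measure \<Rightarrow> ('a \<Rightarrow> real) set \<Rightarrow> bool" where
  "bounded_in_prob M K \<longleftrightarrow> (\<forall>e>0. \<exists>c. \<forall>f\<in>K. measure M {x \<in> space M. c < \<bar>f x\<bar>} \<le> e)"

definition absolutely_convex :: "('a \<Rightarrow> real) set \<Rightarrow> bool" where
  "absolutely_convex K \<longleftrightarrow>
     (\<forall>f\<in>K. \<forall>g\<in>K. \<forall>a b. \<bar>a\<bar> + \<bar>b\<bar> \<le> 1 \<longrightarrow> (\<lambda>x. a * f x + b * g x) \<in> K)"

definition convex_fun_set :: "('a \<Rightarrow> real) set \<Rightarrow> bool" where
  "convex_fun_set C \<longleftrightarrow>
     (\<forall>f\<in>C. \<forall>g\<in>C. \<forall>t::real. 0 \<le> t \<and> t \<le> 1 \<longrightarrow> (\<lambda>x. t * f x + (1 - t) * g x) \<in> C)"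

definition scaleset :: "real \<Rightarrow> ('a \<Rightarrow> real) set \<Rightarrow> ('a \<Rightarrow> real) set" where
  "scaleset c S = {(\<lambda>x. c * f x) | f. f \<in> S}"

definition K_bounded :: "('a \<Rightarrow> real) set \<Rightarrow> ('a \<Rightarrow> real) set \<Rightarrow> bool" where
  "K_bounded K B \<longleftrightarrow> (\<exists>l>0. B \<subseteq> scaleset l K)"

definition weak_top :: "'a measure \<Rightarrow> ('a \<Rightarrow> real) set \<Rightarrow> ('a \<Rightarrow> real) set \<Rightarrow> ('a \<Rightarrow> real) topology" where
  "weak_top M E F = topology_generated_by
     (insert E {{f \<in> E. pairing M f g \<in> U} | g U. g \<in> F \<and> open U})"

definition solid :: "'a measure \<Rightarrow> ('a \<Rightarrow> real) set \<Rightarrow> bool" where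
  "solid M F \<longleftrightarrow> (\<forall>g\<in>F. \<forall>h\<in>borel_measurable M. (AE x in M. \<bar>h x\<bar> \<le> \<bar>g x\<bar>) \<longrightarrow> h \<in> F)"

definition separates :: "'a measure \<Rightarrow> ('a \<Rightarrow> real) set \<Rightarrow> ('a \<Rightarrow> real) set \<Rightarrow> bool" where
  "separates M E F \<longleftrightarrow> (\<forall>f\<in>E. (\<forall>g\<in>F. pairing M f g = 0) \<longrightarrow> (AE x in M. f x = 0))"

definition has_strictly_positive :: "'a measure \<Rightarrow> ('a \<Rightarrow> real) set \<Rightarrow> bool" where
  "has_strictly_positive M F \<longleftrightarrow> (\<exists>g\<in>F. AE x in M. 0 < g x)"

definition L0_topology :: "'a measure \<Rightarrow> ('a \<Rightarrow> real) set \<Rightarrow> ('a \<Rightarrow> real) topology \<Rightarrow> bool" where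
  "L0_topology M E \<tau> \<longleftrightarrow> topspace \<tau> = E \<and>
     (\<forall>U. openin \<tau> U \<longrightarrow> (\<forall>f\<in>U. \<forall>h\<in>E. (AE x in M. h x = f x) \<longrightarrow> h \<in> U))"

definition locally_convex_top :: "('a \<Rightarrow> real) set \<Rightarrow> ('a \<Rightarrow> real) topology \<Rightarrow> bool" where
  "locally_convex_top E \<tau> \<longleftrightarrow>
     continuous_map (prod_topology \<tau> \<tau>) \<tau> (\<lambda>(f, g). \<lambda>x. f x + g x) \<and>
     continuous_map (prod_topology euclideanreal \<tau>) \<tau> (\<lambda>(c, f). \<lambda>x. c * f x) \<and>
     (\<forall>U f. openin \<tau> U \<and> f \<in> U \<longrightarrow> (\<exists>V. openin \<tau> V \<and> f \<in> V \<and> V \<subseteq> U \<and> convex_fun_set V))"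

definition induces :: "'a measure \<Rightarrow> ('a \<Rightarrow> real) set \<Rightarrow> ('a \<Rightarrow> real) topology \<Rightarrow> ('a \<Rightarrow> real) set \<Rightarrow> bool" where
  "induces M K \<tau> F \<longleftrightarrow> F \<subseteq> E'_K M K \<and> solid M F \<and> separates M (E_K M K) F \<and>
     has_strictly_positive M F \<and>
     (\<forall>B. K_bounded K B \<longrightarrow> subtopology \<tau> B = subtopology (weak_top M (E_K M K) F) B)"

definition equicontinuous_Koethe :: "'a measure \<Rightarrow> ('a \<Rightarrow> real) set \<Rightarrow> ('a \<Rightarrow> real) topology \<Rightarrow> bool" where
  "equicontinuous_Koethe M K \<tau> \<longleftrightarrow> compactin \<tau> K \<and> (\<exists>F. induces M K \<tau> F)"

definition Krein_Smulian :: "'a measure \<Rightarrow> ('a \<Rightarrow> real) set \<Rightarrow> ('a \<Rightarrow> real) topology \<Rightarrow> bool" where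
  "Krein_Smulian M K \<tau> \<longleftrightarrow> (\<forall>C. C \<subseteq> E_K M K \<and> ae_saturated M C \<and> convex_fun_set C \<longrightarrow>
     (closedin \<tau> C \<longleftrightarrow> (\<forall>l>0. closedin \<tau> (C \<inter> scaleset l K))))"

definition F_regular :: "'a measure \<Rightarrow> ('a \<Rightarrow> real) set \<Rightarrow> ('a \<Rightarrow> real) topology \<Rightarrow> ('a \<Rightarrow> real) set \<Rightarrow> bool" where
  "F_regular M K \<tau> F \<longleftrightarrow> induces M K \<tau> F \<and>
     (\<forall>\<phi>. continuous_map \<tau> euclideanreal \<phi> \<and>
        (\<forall>f\<in>E_K M K. \<forall>g\<in>E_K M K. \<phi> (\<lambda>x. f x + g x) = \<phi> f + \<phi> g) \<and>
        (\<forall>c. \<forall>f\<in>E_K M K. \<phi> (\<lambda>x. c * f x) = c * \<phi> f)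
      \<longrightarrow> (\<exists>g\<in>F. \<forall>f\<in>E_K M K. \<phi> f = pairing M f g))"

definition uniformly_integrable :: "'a measure \<Rightarrow> ('a \<Rightarrow> real) set \<Rightarrow> bool" where
  "uniformly_integrable M H \<longleftrightarrow>
     (\<forall>e>0. \<exists>c. \<forall>h\<in>H. (\<integral>\<^sup>+x\<in>{x \<in> space M. c < \<bar>h x\<bar>}. ennreal \<bar>h x\<bar> \<partial>M) \<le> ennreal e)"

end

theory Submission
  imports Defs "HOL-Library.Diagonal_Subsequence"
begin

definition nu :: "'a measure \<Rightarrow> ('a \<Rightarrow> real) \<Rightarrow> 'a set \<Rightarrow> real" where
  "nu M h A = (\<integral>x. indicator A x * h x \<partial>M)"

lemma integrable_ind_mult[intro]:
  fixes h :: "'a \<Rightarrow> real"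
  shows "integrable M h \<Longrightarrow> A \<in> sets M \<Longrightarrow> integrable M (\<lambda>x. indicator A x * h x)"
  using integrable_real_mult_indicator[of A M h] by (simp add: mult.commute)

lemma nu_add:
  assumes "integrable M h" "A \<in> sets M" "B \<in> sets M" "A \<inter> B = {}"
  shows "nu M h (A \<union> B) = nu M h A + nu M h B"
proof -
  have "nu M h (A \<union> B) = (\<integral>x. indicator A x * h x + indicator B x * h x \<partial>M)"
    unfolding nu_def by (rule Bochner_Integration.integral_cong[OF refl]) (use assms(4) in \<open>auto simp: indicator_disj_union distrib_right\<close>)
  also have "\<dots> = nu M h A + nu M h B"
    unfolding nu_def using assms by (intro Bochner_Integration.integral_add) auto
  finally show ?thesis .
qed

lemma nu_abs:
  assumes "integrable M h" "A \<in> sets M"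
  shows "\<bar>nu M h A\<bar> \<le> nu M (\<lambda>x. \<bar>h x\<bar>) A"
proof -
  have "\<bar>nu M h A\<bar> \<le> (\<integral>x. norm (indicator A x * h x) \<partial>M)"
    unfolding nu_def using integral_norm_bound[of M "\<lambda>x. indicator A x * h x"] by simp
  also have "\<dots> = nu M (\<lambda>x. \<bar>h x\<bar>) A"
    unfolding nu_def by (rule Bochner_Integration.integral_cong[OF refl]) (auto split: split_indicator)
  finally show ?thesis .
qed

lemma nu_mono:
  assumes "integrable M h" "A \<in> sets M" "B \<in> sets M" "A \<subseteq> B"
  shows "nu M (\<lambda>x. \<bar>h x\<bar>) A \<le> nu M (\<lambda>x. \<bar>h x\<bar>) B"
  unfolding nu_def using assms
  by (intro integral_mono integrable_ind_mult integrable_abs) (auto split: split_indicator)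

lemma nu_le_total:
  assumes "integrable M h" "A \<in> sets M"
  shows "nu M (\<lambda>x. \<bar>h x\<bar>) A \<le> (\<integral>x. \<bar>h x\<bar> \<partial>M)"
  unfolding nu_def using assms
  by (intro integral_mono integrable_ind_mult integrable_abs) (auto split: split_indicator)

lemma nu_nonneg: "0 \<le> nu M (\<lambda>x. \<bar>h x\<bar>) A"
  unfolding nu_def by (intro integral_nonneg_AE) auto

lemma abs_cont:
  fixes h :: "'a \<Rightarrow> real"
  assumes "finite_measure M" "integrable M h" "e > 0"
  shows "\<exists>d>0. \<forall>A\<in>sets M. measure M A < d \<longrightarrow> nu M (\<lambda>x. \<bar>h x\<bar>) A < e"
proof -
  define s where "s n x = \<bar>h x\<bar> - min (\<bar>h x\<bar>) (real n)" for n x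
  have hm: "h \<in> borel_measurable M" using assms by auto
  have lim: "(\<lambda>n. integral\<^sup>L M (s n)) \<longlonglongrightarrow> integral\<^sup>L M (\<lambda>x. 0)"
  proof (rule integral_dominated_convergence[where w="\<lambda>x. \<bar>h x\<bar>"])
    show "(\<lambda>x. 0::real) \<in> borel_measurable M" by simp
    show "s n \<in> borel_measurable M" for n unfolding s_def using hm by measurable
    show "integrable M (\<lambda>x. \<bar>h x\<bar>)" using assms by auto
    show "AE x in M. (\<lambda>n. s n x) \<longlonglongrightarrow> 0"
    proof (rule AE_I2)
      fix x
      obtain N where "\<bar>h x\<bar> \<le> real N" using real_arch_simple by blast
      then have "\<forall>n\<ge>N. s n x = 0" unfolding s_def by auto
      then show "(\<lambda>n. s n x) \<longlonglongrightarrow> 0"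
        by (intro tendsto_eventually) (auto simp: eventually_sequentially)
    qed
    show "AE x in M. norm (s n x) \<le> \<bar>h x\<bar>" for n unfolding s_def by auto
  qed
  then have "\<exists>N. \<forall>n\<ge>N. norm (integral\<^sup>L M (s n) - integral\<^sup>L M (\<lambda>x. 0)) < e/2"
    using assms(3) by (intro LIMSEQ_D) auto
  then obtain N where "\<forall>n\<ge>N. norm (integral\<^sup>L M (s n) - integral\<^sup>L M (\<lambda>x. 0)) < e/2"
    by blast
  then have "norm (integral\<^sup>L M (s N) - integral\<^sup>L M (\<lambda>x. 0)) < e/2" by blast
  then have n: "integral\<^sup>L M (s N) < e/2"
    by auto
  define n where "n = N"
  note n = n[folded n_def]
  define d where "d = e / (2 * (real n + 1))"
  have "d > 0" using assms by (simp add: d_def)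
  moreover have "nu M (\<lambda>x. \<bar>h x\<bar>) A < e" if A: "A \<in> sets M" "measure M A < d" for A
  proof -
    have ints: "integrable M (s n)" unfolding s_def
      by (rule Bochner_Integration.integrable_bound[where f="\<lambda>x. \<bar>h x\<bar>"]) (use assms(2) hm in auto)
    have int2: "integrable M (\<lambda>x. indicator A x * real n)"
      using integrable_ind_mult[OF finite_measure.integrable_const[OF assms(1)] A(1), of "real n"] by blast
    have "nu M (\<lambda>x. \<bar>h x\<bar>) A \<le> (\<integral>x. indicator A x * real n + s n x \<partial>M)"
      unfolding nu_def
      by (rule Bochner_Integration.integral_mono[OF integrable_ind_mult[OF integrable_abs[OF assms(2)] A(1)] Bochner_Integration.integrable_add[OF int2 ints]])
        (auto simp: s_def split: split_indicator)
    also have "\<dots> = (\<integral>x. indicator A x * real n \<partial>M) + integral\<^sup>L M (s n)"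
      using ints int2 by (intro Bochner_Integration.integral_add) auto
    also have "(\<integral>x. indicator A x * real n \<partial>M) = measure M A * real n"
      using A by simp
    also have "measure M A * real n \<le> d * real n" using A by (intro mult_right_mono) auto
    also have "d * real n < e/2" unfolding d_def using assms(3) by (simp add: field_simps)
    finally show ?thesis using n by simp
  qed
  ultimately show ?thesis by blast
qed



lemma cluster_point:
  fixes z :: "nat \<Rightarrow> 'b"
  assumes "compactin X S" "\<And>j. z j \<in> S"
  shows "\<exists>x\<in>S. \<forall>U. openin X U \<and> x \<in> U \<longrightarrow> (\<forall>N. \<exists>j\<ge>N. z j \<in> U)"
proof (rule ccontr)
  assume "\<not> ?thesis"
  then have "\<forall>x\<in>S. \<exists>p. openin X (fst p) \<and> x \<in> fst p \<and> (\<forall>j\<ge>snd p. z j \<notin> fst p)"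
    by force
  then obtain g where g: "\<forall>x\<in>S. openin X (fst (g x)) \<and> x \<in> fst (g x) \<and> (\<forall>j\<ge>snd (g x). z j \<notin> fst (g x))"
    by (rule bchoice[elim_format]) blast
  define U where "U x = fst (g x)" for x
  define N where "N x = snd (g x)" for x
  have UN: "openin X (U x) \<and> x \<in> U x \<and> (\<forall>j\<ge>N x. z j \<notin> U x)" if "x \<in> S" for x
    using g that unfolding U_def N_def by blast
  have "S \<subseteq> \<Union>(U ` S)" using UN by blast
  moreover have "\<forall>V\<in>U ` S. openin X V" using UN by blast
  ultimately obtain \<F> where F: "finite \<F>" "\<F> \<subseteq> U ` S" "S \<subseteq> \<Union>\<F>"
    using assms(1) unfolding compactin_def by meson
  then obtain T where T: "T \<subseteq> S" "finite T" "\<F> = U ` T"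
    by (meson finite_subset_image)
  define N0 where "N0 = Max (insert 0 (N ` T))"
  have "z N0 \<in> \<Union>(U ` T)" using F T assms(2) by blast
  then obtain t where t: "t \<in> T" "z N0 \<in> U t" by blast
  have "N t \<le> N0" unfolding N0_def using T t by (intro Max_ge) auto
  then show False using UN[of t] t T by blast
qed

lemma cluster_cont:
  assumes "continuous_map X euclideanreal \<phi>" "x \<in> topspace X"
    "\<forall>U. openin X U \<and> x \<in> U \<longrightarrow> (\<forall>N. \<exists>j\<ge>N. z j \<in> U)" "e > 0"
  shows "\<exists>j\<ge>N. \<bar>\<phi> (z j) - \<phi> x\<bar> < e"
proof -
  let ?U = "{y \<in> topspace X. \<phi> y \<in> ball (\<phi> x) e}"
  have "openin X ?U" using assms(1) by (intro openin_continuous_map_preimage) auto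
  moreover have "x \<in> ?U" using assms by auto
  ultimately obtain j where "j \<ge> N" "z j \<in> ?U" using assms(3) by blast
  then show ?thesis by (auto simp: dist_real_def abs_minus_commute)
qed

lemma aux3: fixes x y z :: real shows "x < y/2 \<Longrightarrow> z < y/2 \<Longrightarrow> y \<le> x + z \<Longrightarrow> False" by linarith

lemma lim_cluster_eq:
  fixes a :: "nat \<Rightarrow> real"
  assumes "a \<longlonglongrightarrow> L" "\<And>e N. e > 0 \<Longrightarrow> \<exists>j\<ge>N. \<bar>a j - c\<bar> < e"
  shows "c = L"
proof (rule ccontr)
  assume "c \<noteq> L"
  then have e: "\<bar>c - L\<bar> / 2 > 0" by simp
  from LIMSEQ_D[OF assms(1) e] obtain N where N: "\<forall>n\<ge>N. norm (a n - L) < \<bar>c - L\<bar> / 2" by blast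
  from assms(2)[OF e, of N] obtain j where "j \<ge> N" "\<bar>a j - c\<bar> < \<bar>c - L\<bar> / 2" by blast
  moreover have "\<bar>a j - L\<bar> < \<bar>c - L\<bar> / 2" using N \<open>j \<ge> N\<close> by auto
  moreover have "\<bar>c - L\<bar> \<le> \<bar>a j - c\<bar> + \<bar>a j - L\<bar>" by linarith
  ultimately show False using aux3 by blast
qed

lemma tail_measure_le:
  assumes "finite_measure M" "\<And>k. S k \<in> sets M" "\<And>j. measure M (S (N + j)) \<le> B * (1/4)^j"
  shows "measure M (\<Union>k\<in>{N..}. S k) \<le> 2 * B"
proof -
  interpret finite_measure M by fact
  have B: "B \<ge> 0" using assms(3)[of 0] measure_nonneg[of M "S (N+0)"] by (simp only: power_0 mult_1_right add_0_right)
  have eq: "(\<Union>k\<in>{N..}. S k) = (\<Union>j. S (N + j))"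
  proof
    show "(\<Union>k\<in>{N..}. S k) \<subseteq> (\<Union>j. S (N + j))"
    proof
      fix x assume "x \<in> (\<Union>k\<in>{N..}. S k)"
      then obtain k where "k \<ge> N" "x \<in> S k" by auto
      then have "x \<in> S (N + (k - N))" by (simp add: le_add_diff_inverse)
      then show "x \<in> (\<Union>j. S (N + j))" by blast
    qed
    show "(\<Union>j. S (N + j)) \<subseteq> (\<Union>k\<in>{N..}. S k)"
    proof
      fix x assume "x \<in> (\<Union>j. S (N + j))"
      then obtain j where "x \<in> S (N + j)" by auto
      moreover have "N + j \<in> {N..}" by simp
      ultimately show "x \<in> (\<Union>k\<in>{N..}. S k)" by blast
    qed
  qed
  have sg: "summable (\<lambda>j. B * (1/4::real)^j)" by simp
  have sm: "summable (\<lambda>j. measure M (S (N + j)))"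
    by (rule summable_comparison_test[OF _ sg]) (use assms(3) in auto)
  have "measure M (\<Union>j. S (N + j)) \<le> (\<Sum>j. measure M (S (N + j)))"
    using assms(2) sm by (intro finite_measure_subadditive_countably) auto
  also have "\<dots> \<le> (\<Sum>j. B * (1/4::real)^j)"
    by (rule suminf_le[OF _ sm sg]) (use assms(3) in auto)
  also have "\<dots> = B * (4/3)"
    by (subst suminf_mult) (auto simp: suminf_geometric)
  also have "\<dots> \<le> 2 * B" using B by simp
  finally show ?thesis using eq by simp
qed

primrec bseq :: "(real \<Rightarrow> real) \<Rightarrow> nat \<Rightarrow> real" where
  "bseq G 0 = 1"
| "bseq G (Suc k) = min (bseq G k) (G (bseq G k)) / 4"

lemma bseq_pos: "(\<And>d. d > 0 \<Longrightarrow> G d > 0) \<Longrightarrow> bseq G k > 0"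
  by (induction k) auto

lemma bseq_decay:
  assumes "\<And>d. d > 0 \<Longrightarrow> G d > 0"
  shows "bseq G (k + j) \<le> bseq G k * (1/4)^j"
proof (induction j)
  case 0 then show ?case by simp
next
  case (Suc j)
  have "bseq G (k + Suc j) \<le> bseq G (k + j) / 4" by simp
  also have "\<dots> \<le> bseq G k * (1/4)^j / 4" using Suc by simp
  finally show ?case by simp
qed

lemma bseq_le: "(\<And>d. d > 0 \<Longrightarrow> G d > 0) \<Longrightarrow> bseq G k \<le> (1/4)^k"
  using bseq_decay[of G 0 k] by simp

locale dpc =
  fixes M :: "'a measure" and X :: "'b topology" and K :: "'b set"
    and H :: "'b \<Rightarrow> 'a \<Rightarrow> real" and C :: real
  assumes M: "prob_space M" and comp: "compactin X K"
    and intH: "\<And>f. f \<in> K \<Longrightarrow> integrable M (H f)"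
    and bnd: "\<And>f. f \<in> K \<Longrightarrow> (\<integral>x. \<bar>H f x\<bar> \<partial>M) \<le> C"
    and cont: "\<And>A. A \<in> sets M \<Longrightarrow> continuous_map X euclideanreal (\<lambda>f. nu M (H f) A)"
begin

lemma fm: "finite_measure M" using M prob_space_def by blast

lemma partA:
  assumes e: "e > 0"
    and neg: "\<forall>d>0. \<exists>f\<in>K. \<exists>A\<in>sets M. measure M A < d \<and> e < \<bar>nu M (H f) A\<bar>"
  shows "\<exists>y D. (\<forall>m. y m \<in> K) \<and> (\<forall>m. D m \<in> sets M) \<and> disjoint_family D \<and>
    (\<forall>m. 3*e/4 \<le> \<bar>nu M (H (y m)) (D m)\<bar>) \<and>
    (\<forall>N. measure M (\<Union>m\<in>{N..}. D m) \<le> 2 * (1/4)^N)"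
proof -
  define P where "P d f A \<longleftrightarrow> f \<in> K \<and> A \<in> sets M \<and> measure M A < d \<and> e < \<bar>nu M (H f) A\<bar>" for d f A
  define pf where "pf d = (SOME f. \<exists>A. P d f A)" for d
  define pA where "pA d = (SOME A. P d (pf d) A)" for d
  have pP: "P d (pf d) (pA d)" if "d > 0" for d
  proof -
    have "\<exists>f A. P d f A" using neg that unfolding P_def by blast
    then have "\<exists>A. P d (pf d) A" unfolding pf_def by (rule someI_ex)
    then show ?thesis unfolding pA_def by (rule someI_ex)
  qed
  define eta where "eta f = (SOME d. d > 0 \<and> (\<forall>A\<in>sets M. measure M A < d \<longrightarrow> nu M (\<lambda>x. \<bar>H f x\<bar>) A < e/4))" for f
  have etaP: "eta f > 0 \<and> (\<forall>A\<in>sets M. measure M A < eta f \<longrightarrow> nu M (\<lambda>x. \<bar>H f x\<bar>) A < e/4)"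
    if "f \<in> K" for f
    unfolding eta_def by (rule someI_ex) (rule abs_cont[OF fm intH[OF that]], use e in simp)
  define G where "G d = eta (pf d)" for d
  have Gpos: "G d > 0" if "d > 0" for d
    using etaP pP[OF that] unfolding G_def P_def by blast
  define b where "b = bseq G"
  have bpos: "b k > 0" for k unfolding b_def using bseq_pos Gpos by blast
  define y where "y k = pf (b k)" for k
  define S where "S k = pA (b k)" for k
  have yK: "y k \<in> K" and SM: "S k \<in> sets M" and Sm: "measure M (S k) < b k"
    and Se: "e < \<bar>nu M (H (y k)) (S k)\<bar>" for k
    using pP[OF bpos[of k]] unfolding y_def S_def P_def by auto
  have tailS: "measure M (\<Union>k\<in>{N..}. S k) \<le> 2 * b N" for N
  proof (rule tail_measure_le[OF fm SM])
    fix j show "measure M (S (N + j)) \<le> b N * (1/4)^j"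
      using Sm[of "N+j"] bseq_decay[of G N j, OF Gpos] unfolding b_def by linarith
  qed
  define T where "T m = (\<Union>k\<in>{Suc m..}. S k)" for m
  have TM: "T m \<in> sets M" for m unfolding T_def using SM by (intro sets.countable_UN') auto
  have Tsmall: "measure M (T m) < eta (y m)" for m
  proof -
    have "measure M (T m) \<le> 2 * b (Suc m)" unfolding T_def by (rule tailS)
    also have "\<dots> \<le> 2 * (G (b m) / 4)" unfolding b_def by simp
    also have "\<dots> < G (b m)" using Gpos[OF bpos[of m]] by simp
    finally show ?thesis unfolding G_def y_def by simp
  qed
  define D where "D m = S m - T m" for m
  have DM: "D m \<in> sets M" for m unfolding D_def using SM TM by auto
  have disj: "disjoint_family D"
    unfolding disjoint_family_on_def
  proof (intro ballI impI)
    fix m n :: nat assume "m \<noteq> n"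
    then consider "m < n" | "n < m" by linarith
    then show "D m \<inter> D n = {}"
    proof cases
      case 1 then have "S n \<subseteq> T m" unfolding T_def by (auto intro!: bexI[of _ n])
      then show ?thesis unfolding D_def by auto
    next
      case 2 then have "S m \<subseteq> T n" unfolding T_def by (auto intro!: bexI[of _ m])
      then show ?thesis unfolding D_def by auto
    qed
  qed
  have Dbig: "3*e/4 \<le> \<bar>nu M (H (y m)) (D m)\<bar>" for m
  proof -
    have int: "integrable M (H (y m))" using intH yK by blast
    have "S m = D m \<union> (S m \<inter> T m)" "D m \<inter> (S m \<inter> T m) = {}" unfolding D_def by auto
    then have split: "nu M (H (y m)) (S m) = nu M (H (y m)) (D m) + nu M (H (y m)) (S m \<inter> T m)"
      using nu_add[OF int DM[of m], of "S m \<inter> T m"] SM TM by auto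
    have "\<bar>nu M (H (y m)) (S m \<inter> T m)\<bar> \<le> nu M (\<lambda>x. \<bar>H (y m) x\<bar>) (S m \<inter> T m)"
      using nu_abs[OF int sets.Int[OF SM TM]] .
    also have "\<dots> \<le> nu M (\<lambda>x. \<bar>H (y m) x\<bar>) (T m)"
      using nu_mono[OF int sets.Int[OF SM TM] TM[of m]] by blast
    also have "\<dots> < e/4" using etaP[OF yK[of m]] Tsmall[of m] TM[of m] by blast
    finally show ?thesis using Se[of m] split by linarith
  qed
  have Dtail: "measure M (\<Union>m\<in>{N..}. D m) \<le> 2 * (1/4)^N" for N
  proof -
    have "measure M (\<Union>m\<in>{N..}. D m) \<le> measure M (\<Union>k\<in>{N..}. S k)"
      using SM unfolding D_def
      by (intro finite_measure.finite_measure_mono[OF fm] sets.countable_UN') auto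
    also have "\<dots> \<le> 2 * b N" by (rule tailS)
    also have "\<dots> \<le> 2 * (1/4)^N" unfolding b_def using bseq_le[of G N, OF Gpos] by linarith
    finally show ?thesis .
  qed
  show ?thesis using yK DM disj Dbig Dtail by blast
qed

end


primrec hump :: "(nat set \<Rightarrow> nat \<Rightarrow> nat \<Rightarrow> nat) \<Rightarrow> (nat \<Rightarrow> nat) \<Rightarrow> (nat \<Rightarrow> nat) \<Rightarrow> nat \<Rightarrow> nat set \<times> nat \<times> nat" where
  "hump pk nx rr 0 = ({}, 0, 0)"
| "hump pk nx rr (Suc k) =
     (let i = pk (fst (hump pk nx rr k)) (fst (snd (hump pk nx rr k))) (snd (snd (hump pk nx rr k)))
      in (insert (rr i) (fst (hump pk nx rr k)), nx i, i))"

lemma zero_by_tails: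
  fixes c :: real
  assumes "\<And>N. \<bar>c\<bar> \<le> u N" "u \<longlonglongrightarrow> 0"
  shows "c = 0"
proof -
  have "\<bar>c\<bar> \<le> 0" by (rule LIMSEQ_le_const[OF assms(2)]) (use assms(1) in auto)
  then show ?thesis by simp
qed

context dpc
begin

definition clus :: "(nat \<Rightarrow> 'b) \<Rightarrow> 'b \<Rightarrow> bool" where
  "clus w x \<longleftrightarrow> (\<forall>U. openin X U \<and> x \<in> U \<longrightarrow> (\<forall>N. \<exists>j\<ge>N. w j \<in> U))"

lemma clus_exists: "(\<And>j. w j \<in> K) \<Longrightarrow> \<exists>x\<in>K. clus w x"
  unfolding clus_def using cluster_point[OF comp] by blast

lemma clus_val:
  assumes "clus w x" "x \<in> K" "A \<in> sets M" "e > 0"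
  shows "\<exists>j\<ge>N. \<bar>nu M (H (w j)) A - nu M (H x) A\<bar> < e"
  using cluster_cont[OF cont[OF assms(3)], of x w e N] assms compactin_subset_topspace[OF comp]
  unfolding clus_def by blast

lemma tail_zero:
  assumes "integrable M h" "\<And>m. D m \<in> sets M"
    and Dtail: "\<And>N. measure M (\<Union>m\<in>{N..}. D m) \<le> 2 * (1/4)^N"
  shows "(\<lambda>N. nu M (\<lambda>x. \<bar>h x\<bar>) (\<Union>m\<in>{N..}. D m)) \<longlonglongrightarrow> 0"
proof (rule order_tendstoI)
  fix a :: real assume "a < 0"
  then show "eventually (\<lambda>N. a < nu M (\<lambda>x. \<bar>h x\<bar>) (\<Union>m\<in>{N..}. D m)) sequentially"
    using nu_nonneg[of M h] by (intro always_eventually) (auto intro: less_le_trans)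
next
  fix a :: real assume a: "0 < a"
  obtain d where d: "d > 0" "\<forall>A\<in>sets M. measure M A < d \<longrightarrow> nu M (\<lambda>x. \<bar>h x\<bar>) A < a"
    using abs_cont[OF fm assms(1) a] by blast
  have "(\<lambda>N. 2 * (1/4::real)^N) \<longlonglongrightarrow> 2 * 0"
    by (intro tendsto_mult tendsto_const LIMSEQ_power_zero) simp
  then have "eventually (\<lambda>N. 2 * (1/4::real)^N < d) sequentially"
    using d(1) by (intro order_tendstoD(2)) auto
  then show "eventually (\<lambda>N. nu M (\<lambda>x. \<bar>h x\<bar>) (\<Union>m\<in>{N..}. D m) < a) sequentially"
  proof (rule eventually_mono)
    fix N assume "2 * (1/4::real)^N < d"
    moreover have "(\<Union>m\<in>{N..}. D m) \<in> sets M" using assms(2) by (intro sets.countable_UN') auto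
    ultimately show "nu M (\<lambda>x. \<bar>h x\<bar>) (\<Union>m\<in>{N..}. D m) < a"
      using d(2) Dtail[of N] by force
  qed
qed

end


context dpc
begin

lemma partB:
  assumes e: "e > 0"
    and yK: "\<And>m. y m \<in> K" and DM: "\<And>m. D m \<in> sets M" and disj: "disjoint_family D"
    and Dbig: "\<And>m. 3*e/4 \<le> \<bar>nu M (H (y m)) (D m)\<bar>"
    and Dtail: "\<And>N. measure M (\<Union>m\<in>{N..}. D m) \<le> 2 * (1/4)^N"
  shows False
proof -
  define U where "U J = (\<Union>m\<in>J. D m)" for J
  have UM: "U J \<in> sets M" for J unfolding U_def using DM by (intro sets.countable_UN') auto
  have tl: "(\<lambda>N. nu M (\<lambda>x. \<bar>h x\<bar>) (U {N..})) \<longlonglongrightarrow> 0" if "integrable M h" for h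
    unfolding U_def using tail_zero[OF that DM Dtail] .
  have nubnd: "\<bar>nu M (H f) A\<bar> \<le> C" if "f \<in> K" "A \<in> sets M" for f A
    using nu_abs[OF intH[OF that(1)] that(2)] nu_le_total[OF intH[OF that(1)] that(2)] bnd[OF that(1)]
    by linarith
  define B where "B l = U (set l)" for l :: "nat list"
  define a where "a n i = nu M (H (y i)) (B (from_nat n))" for n i
  interpret ss: subseqs "\<lambda>n s. convergent (\<lambda>i. a n (s i))"
  proof
    fix n and s :: "nat \<Rightarrow> nat" assume "strict_mono s"
    obtain f where f: "strict_mono f" "monoseq (\<lambda>i. a n (s (f i)))"
      using seq_monosub[of "\<lambda>i. a n (s i)"] by blast
    have "Bseq (\<lambda>i. a n (s (f i)))"
      unfolding a_def using nubnd yK UM unfolding B_def by (intro BseqI'[where K=C]) auto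
    then have "convergent (\<lambda>i. a n (s (f i)))" using f(2) Bseq_monoseq_convergent by blast
    then show "\<exists>r'. strict_mono r' \<and> convergent (\<lambda>i. a n ((s \<circ> r') i))"
      using f(1) by (auto simp: comp_def)
  qed
  define r where "r = ss.diagseq"
  have rmono: "strict_mono r" unfolding r_def by (rule ss.subseq_diagseq)
  have conv: "convergent (\<lambda>i. a n (r i))" for n
  proof -
    have "convergent (\<lambda>i. a n ((ss.diagseq \<circ> (+) (Suc n)) i))"
    proof (rule ss.diagseq_holds)
      fix r' s :: "nat \<Rightarrow> nat" and n :: nat assume "strict_mono r'" "convergent (\<lambda>i. a n (s i))"
      then show "convergent (\<lambda>i. a n ((s \<circ> r') i))"
        using convergent_subseq_convergent[of "\<lambda>i. a n (s i)" r'] by (simp add: comp_def)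
    qed
    then have "convergent (\<lambda>i. a n (ss.diagseq (i + Suc n)))" by (simp add: comp_def add.commute)
    then show ?thesis unfolding r_def using convergent_ignore_initial_segment by blast
  qed
  define z where "z i = y (r i)" for i
  have zK: "z i \<in> K" for i unfolding z_def using yK by blast
  define Lim where "Lim l = lim (\<lambda>i. nu M (H (z i)) (B l))" for l
  have Blim: "(\<lambda>i. nu M (H (z i)) (B l)) \<longlonglongrightarrow> Lim l" for l
  proof -
    have "convergent (\<lambda>i. a (to_nat l) (r i))" by (rule conv)
    then have "convergent (\<lambda>i. nu M (H (z i)) (B l))" unfolding a_def z_def by simp
    then show ?thesis unfolding Lim_def by (simp add: convergent_LIMSEQ_iff)
  qed
  obtain f0 where f0: "f0 \<in> K" "clus z f0" using clus_exists zK by blast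
  have step1: "nu M (H f) (B l) = Lim l" if s: "strict_mono s" and f: "f \<in> K" "clus (z \<circ> s) f" for s f l
  proof (rule lim_cluster_eq)
    show "(\<lambda>j. nu M (H ((z \<circ> s) j)) (B l)) \<longlonglongrightarrow> Lim l"
      using LIMSEQ_subseq_LIMSEQ[OF Blim s] by (simp add: comp_def)
    show "\<exists>j\<ge>N. \<bar>nu M (H ((z \<circ> s) j)) (B l) - nu M (H f) (B l)\<bar> < e" if "e > 0" for e N
      using clus_val[OF f(2) f(1) UM[of "set l"] that] unfolding B_def by blast
  qed
  have f0clus: "clus (z \<circ> id) f0" using f0 by simp
  have step2: "nu M (H f) (U J) = nu M (H f0) (U J)" if s: "strict_mono s" and f: "f \<in> K" "clus (z \<circ> s) f" for s f J
  proof -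
    have key: "\<bar>nu M (H f) (U J) - nu M (H f0) (U J)\<bar> \<le>
       nu M (\<lambda>x. \<bar>H f x\<bar>) (U {N..}) + nu M (\<lambda>x. \<bar>H f0 x\<bar>) (U {N..})" for N
    proof -
      define TN where "TN = U (J \<inter> {..<N})"
      have TNB: "TN = B (sorted_list_of_set (J \<inter> {..<N}))" unfolding TN_def B_def by simp
      have eqT: "nu M (H f) TN = nu M (H f0) TN"
        unfolding TNB using step1[OF s f] step1[OF strict_mono_id f0(1) f0clus] by simp
      have R: "U J - TN \<subseteq> U {N..}"
      proof
        fix x assume "x \<in> U J - TN"
        then obtain m where m: "m \<in> J" "x \<in> D m" "m \<notin> J \<inter> {..<N}" unfolding TN_def U_def by blast
        then have "m \<in> {N..}" by auto
        with m show "x \<in> U {N..}" unfolding U_def by blast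
      qed
      have RM: "U J - TN \<in> sets M" unfolding TN_def using UM[of J] UM[of "J \<inter> {..<N}"] by (rule sets.Diff)
      have dec: "nu M (H g) (U J) = nu M (H g) TN + nu M (H g) (U J - TN)" if "g \<in> K" for g
      proof -
        have "U J = TN \<union> (U J - TN)" unfolding TN_def U_def by auto
        then show ?thesis using nu_add[OF intH[OF that] UM[of "J \<inter> {..<N}"] RM] unfolding TN_def by auto
      qed
      have small: "\<bar>nu M (H g) (U J - TN)\<bar> \<le> nu M (\<lambda>x. \<bar>H g x\<bar>) (U {N..})" if "g \<in> K" for g
        using nu_abs[OF intH[OF that] RM] nu_mono[OF intH[OF that] RM UM R] by linarith
      show ?thesis using dec[OF f(1)] dec[OF f0(1)] eqT small[OF f(1)] small[OF f0(1)] by linarith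
    qed
    have "nu M (H f) (U J) - nu M (H f0) (U J) = 0"
      by (rule zero_by_tails[OF key]) (use tendsto_add[OF tl[OF intH[OF f(1)]] tl[OF intH[OF f0(1)]]] in simp)
    then show ?thesis by simp
  qed
  have step3: "(\<lambda>i. nu M (H (z i)) (U J)) \<longlonglongrightarrow> nu M (H f0) (U J)" for J
  proof (rule ccontr)
    let ?a = "\<lambda>i. nu M (H (z i)) (U J)" and ?c = "nu M (H f0) (U J)"
    assume "\<not> ?a \<longlonglongrightarrow> ?c"
    then obtain \<eta> where \<eta>: "\<eta> > 0" "\<forall>N. \<exists>n\<ge>N. \<eta> \<le> \<bar>?a n - ?c\<bar>"
      unfolding LIMSEQ_def dist_real_def by (auto simp: not_less)
    then have "infinite {n. \<eta> \<le> \<bar>?a n - ?c\<bar>}" unfolding infinite_nat_iff_unbounded_le by auto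
    then obtain s :: "nat \<Rightarrow> nat" where s: "strict_mono s" "\<forall>n. s n \<in> {n. \<eta> \<le> \<bar>?a n - ?c\<bar>}"
      using infinite_enumerate by blast
    obtain f where f: "f \<in> K" "clus (z \<circ> s) f" using clus_exists[of "z \<circ> s"] zK by auto
    have "nu M (H f) (U J) = ?c" by (rule step2[OF s(1) f])
    moreover obtain j where "\<bar>nu M (H ((z \<circ> s) j)) (U J) - nu M (H f) (U J)\<bar> < \<eta>"
      using clus_val[OF f(2) f(1) UM \<eta>(1)] by blast
    ultimately have "\<bar>nu M (H (z (s j))) (U J) - ?c\<bar> < \<eta>" by simp
    moreover have "\<eta> \<le> \<bar>nu M (H (z (s j))) (U J) - ?c\<bar>" using s(2) by blast
    ultimately show False by linarith
  qed
  define lam where "lam i A = nu M (H (z i)) A - nu M (H f0) A" for i A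
  have H1: "(\<lambda>i. lam i (U J)) \<longlonglongrightarrow> 0" for J
    unfolding lam_def using tendsto_diff[OF step3[of J] tendsto_const[of "nu M (H f0) (U J)"]] by simp
  have H2: "eventually (\<lambda>i. e/2 \<le> \<bar>lam i (D (r i))\<bar>) sequentially"
  proof -
    have "(\<lambda>i. nu M (\<lambda>x. \<bar>H f0 x\<bar>) (U {r i..})) \<longlonglongrightarrow> 0"
      using LIMSEQ_subseq_LIMSEQ[OF tl[OF intH[OF f0(1)]] rmono] by (simp add: comp_def)
    then have "eventually (\<lambda>i. nu M (\<lambda>x. \<bar>H f0 x\<bar>) (U {r i..}) < e/4) sequentially"
      using e by (intro order_tendstoD(2)) auto
    then show ?thesis
    proof (rule eventually_mono)
      fix i assume *: "nu M (\<lambda>x. \<bar>H f0 x\<bar>) (U {r i..}) < e/4"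
      have sub: "D (r i) \<subseteq> U {r i..}" unfolding U_def by auto
      have "\<bar>nu M (H f0) (D (r i))\<bar> \<le> nu M (\<lambda>x. \<bar>H f0 x\<bar>) (U {r i..})"
        using nu_abs[OF intH[OF f0(1)] DM[of "r i"]] nu_mono[OF intH[OF f0(1)] DM[of "r i"] UM sub] by linarith
      then show "e/2 \<le> \<bar>lam i (D (r i))\<bar>"
        using Dbig[of "r i"] * unfolding lam_def z_def by linarith
    qed
  qed
  have H3: "\<exists>N. \<forall>N'\<ge>N. \<forall>A\<in>sets M. A \<subseteq> U {N'..} \<longrightarrow> \<bar>lam i A\<bar> < \<epsilon>" if "\<epsilon> > 0" for i \<epsilon>
  proof -
    have "eventually (\<lambda>N. nu M (\<lambda>x. \<bar>H (z i) x\<bar>) (U {N..}) < \<epsilon>/2) sequentially"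
      using that by (intro order_tendstoD(2)[OF tl[OF intH[OF zK[of i]]]]) auto
    moreover have "eventually (\<lambda>N. nu M (\<lambda>x. \<bar>H f0 x\<bar>) (U {N..}) < \<epsilon>/2) sequentially"
      using that by (intro order_tendstoD(2)[OF tl[OF intH[OF f0(1)]]]) auto
    ultimately have "eventually (\<lambda>N. nu M (\<lambda>x. \<bar>H (z i) x\<bar>) (U {N..}) < \<epsilon>/2 \<and>
        nu M (\<lambda>x. \<bar>H f0 x\<bar>) (U {N..}) < \<epsilon>/2) sequentially"
      by (rule eventually_conj)
    then obtain N where N: "\<forall>N'\<ge>N. nu M (\<lambda>x. \<bar>H (z i) x\<bar>) (U {N'..}) < \<epsilon>/2 \<and>
        nu M (\<lambda>x. \<bar>H f0 x\<bar>) (U {N'..}) < \<epsilon>/2"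
      unfolding eventually_sequentially by blast
    have "\<bar>lam i A\<bar> < \<epsilon>" if "N' \<ge> N" "A \<in> sets M" "A \<subseteq> U {N'..}" for N' A
    proof -
      have "\<bar>nu M (H (z i)) A\<bar> \<le> nu M (\<lambda>x. \<bar>H (z i) x\<bar>) (U {N'..})"
        using nu_abs[OF intH[OF zK[of i]] that(2)] nu_mono[OF intH[OF zK[of i]] that(2) UM that(3)] by linarith
      moreover have "\<bar>nu M (H f0) A\<bar> \<le> nu M (\<lambda>x. \<bar>H f0 x\<bar>) (U {N'..})"
        using nu_abs[OF intH[OF f0(1)] that(2)] nu_mono[OF intH[OF f0(1)] that(2) UM that(3)] by linarith
      moreover have "\<bar>lam i A\<bar> \<le> \<bar>nu M (H (z i)) A\<bar> + \<bar>nu M (H f0) A\<bar>"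
        unfolding lam_def by (rule abs_triangle_ineq4)
      moreover have "nu M (\<lambda>x. \<bar>H (z i) x\<bar>) (U {N'..}) < \<epsilon>/2" "nu M (\<lambda>x. \<bar>H f0 x\<bar>) (U {N'..}) < \<epsilon>/2"
        using N that(1) by auto
      ultimately show ?thesis by linarith
    qed
    then show ?thesis by blast
  qed
  define cond where "cond J N p i \<longleftrightarrow> p < i \<and> N \<le> r i \<and> \<bar>lam i (U J)\<bar> < e/8 \<and> e/2 \<le> \<bar>lam i (D (r i))\<bar>"
    for J N p i
  have condex: "\<exists>i. cond J N p i" for J N p
  proof -
    have "eventually (\<lambda>i. p < i) sequentially" by (rule eventually_gt_at_top)
    moreover have "eventually (\<lambda>i. N \<le> r i) sequentially"
      using eventually_ge_at_top[of N] by (rule eventually_mono) (use seq_suble[OF rmono] le_trans in blast)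
    moreover have "eventually (\<lambda>i. \<bar>lam i (U J)\<bar> < e/8) sequentially"
      using e by (intro order_tendstoD(2)[OF tendsto_rabs_zero[OF H1]]) auto
    moreover note H2
    ultimately have "eventually (\<lambda>i. p < i \<and> N \<le> r i \<and> \<bar>lam i (U J)\<bar> < e/8 \<and> e/2 \<le> \<bar>lam i (D (r i))\<bar>) sequentially"
      by (intro eventually_conj)
    then obtain i0 where "\<forall>i\<ge>i0. p < i \<and> N \<le> r i \<and> \<bar>lam i (U J)\<bar> < e/8 \<and> e/2 \<le> \<bar>lam i (D (r i))\<bar>"
      unfolding eventually_sequentially by blast
    then have "cond J N p i0" unfolding cond_def by blast
    then show ?thesis by blast
  qed
  define pk where "pk J N p = (SOME i. cond J N p i)" for J N p
  have pkP: "cond J N p (pk J N p)" for J N p unfolding pk_def by (rule someI_ex[OF condex])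
  define nxP where "nxP i N' \<longleftrightarrow> r i < N' \<and> (\<forall>A\<in>sets M. A \<subseteq> U {N'..} \<longrightarrow> \<bar>lam i A\<bar> < e/8)" for i N'
  have nxex: "\<exists>N'. nxP i N'" for i
  proof -
    obtain N where N: "\<forall>N'\<ge>N. \<forall>A\<in>sets M. A \<subseteq> U {N'..} \<longrightarrow> \<bar>lam i A\<bar> < e/8"
      using H3[of "e/8" i] e by auto
    have "max N (Suc (r i)) \<ge> N" by simp
    then have "\<forall>A\<in>sets M. A \<subseteq> U {max N (Suc (r i))..} \<longrightarrow> \<bar>lam i A\<bar> < e/8" using N by blast
    moreover have "r i < max N (Suc (r i))" by simp
    ultimately show ?thesis unfolding nxP_def by blast
  qed
  define nx where "nx i = (SOME N'. nxP i N')" for i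
  have nxPP: "nxP i (nx i)" for i unfolding nx_def by (rule someI_ex[OF nxex])
  define st where "st = hump pk nx r"
  define Jk where "Jk k = fst (st k)" for k
  define Nk where "Nk k = fst (snd (st k))" for k
  define Pk where "Pk k = snd (snd (st k))" for k
  define I where "I k = Pk (Suc k)" for k
  have Ieq: "I k = pk (Jk k) (Nk k) (Pk k)" for k
    unfolding I_def Pk_def Jk_def Nk_def st_def by (simp add: Let_def)
  have JkS: "Jk (Suc k) = insert (r (I k)) (Jk k)" for k
    unfolding Ieq Pk_def Jk_def Nk_def st_def by (simp add: Let_def)
  have NkS: "Nk (Suc k) = nx (I k)" for k
    unfolding Ieq Pk_def Jk_def Nk_def st_def by (simp add: Let_def)
  have Jk0: "Jk 0 = {}" and Nk0: "Nk 0 = 0" and Pk0: "Pk 0 = 0"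
    unfolding Pk_def Jk_def Nk_def st_def by simp_all
  have condI: "cond (Jk k) (Nk k) (Pk k) (I k)" for k unfolding Ieq by (rule pkP)
  have Imono: "strict_mono I"
    unfolding strict_mono_Suc_iff
  proof
    fix k have "Pk (Suc k) < I (Suc k)" using condI[of "Suc k"] unfolding cond_def by blast
    then show "I k < I (Suc k)" unfolding I_def .
  qed
  define q where "q = r \<circ> I"
  have qmono: "strict_mono q" unfolding q_def by (rule strict_mono_o[OF rmono Imono])
  have Nkq: "Nk k \<le> q k" for k using condI[of k] unfolding cond_def q_def by auto
  have qNk: "q k < Nk (Suc k)" for k using nxPP[of "I k"] unfolding NkS nxP_def q_def by auto
  have NkSuc: "Nk n \<le> Nk (Suc n)" for n using Nkq[of n] qNk[of n] by linarith
  have Nkmono: "Nk k \<le> Nk k'" if "k \<le> k'" for k k'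
    by (rule lift_Suc_mono_le[of Nk, OF NkSuc that])
  have Jkq: "Jk k = q ` {..<k}" for k
  proof (induction k)
    case 0 then show ?case using Jk0 by simp
  next
    case (Suc k) then show ?case using JkS[of k] by (simp add: lessThan_Suc q_def)
  qed
  define T where "T = U (range q)"
  have inj: "q k = q k' \<longleftrightarrow> k = k'" for k k' using strict_mono_eq[OF qmono] .
  have Udisj: "U A \<inter> U B = {}" if AB: "A \<inter> B = {}" for A B
  proof (rule equals0I)
    fix x assume "x \<in> U A \<inter> U B"
    then obtain m n where mn: "m \<in> A" "x \<in> D m" "n \<in> B" "x \<in> D n" unfolding U_def by blast
    then have "m \<noteq> n" using AB by blast
    then have "D m \<inter> D n = {}" using disj unfolding disjoint_family_on_def by blast
    then show False using mn by blast
  qed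
  have Uun: "U (A \<union> B) = U A \<union> U B" for A B unfolding U_def by auto
  have lam_add: "lam i (U A \<union> U B) = lam i (U A) + lam i (U B)" if "A \<inter> B = {}" for i A B
    unfolding lam_def using nu_add[OF intH[OF zK[of i]] UM UM Udisj[OF that]] nu_add[OF intH[OF f0(1)] UM UM Udisj[OF that]]
    by simp
  have big: "e/4 < \<bar>lam (I k) T\<bar>" for k
  proof -
    let ?A = "q ` {..<k}" and ?B = "{q k}" and ?C = "q ` {Suc k..}"
    have rq: "range q = ?A \<union> ?B \<union> ?C"
    proof -
      have u: "(UNIV::nat set) = {..<k} \<union> {k} \<union> {Suc k..}" by auto
      have "range q = q ` ({..<k} \<union> {k} \<union> {Suc k..})" by (subst u[symmetric]) (rule refl)
      then show ?thesis by (simp only: image_Un image_insert image_empty)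
    qed
    have d1: "?A \<inter> ?B = {}" by (auto simp: inj)
    have d2: "(?A \<union> ?B) \<inter> ?C = {}" by (auto simp: inj)
    have "lam (I k) T = lam (I k) (U (?A \<union> ?B)) + lam (I k) (U ?C)"
      unfolding T_def rq Uun[of "?A \<union> ?B" ?C] by (rule lam_add[OF d2])
    also have "lam (I k) (U (?A \<union> ?B)) = lam (I k) (U ?A) + lam (I k) (U ?B)"
      unfolding Uun by (rule lam_add[OF d1])
    finally have dec: "lam (I k) T = lam (I k) (U ?A) + lam (I k) (U ?B) + lam (I k) (U ?C)" .
    have c1: "\<bar>lam (I k) (U ?A)\<bar> < e/8" using condI[of k] unfolding cond_def Jkq by blast
    have UB: "U ?B = D (r (I k))" unfolding U_def q_def by simp
    have c2: "e/2 \<le> \<bar>lam (I k) (U ?B)\<bar>" using condI[of k] unfolding cond_def UB by blast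
    have Csub: "U ?C \<subseteq> U {Nk (Suc k)..}"
    proof -
      have "q k' \<ge> Nk (Suc k)" if "k' \<ge> Suc k" for k'
        using Nkmono[OF that] Nkq[of k'] by linarith
      then show ?thesis unfolding U_def by auto
    qed
    have c3: "\<bar>lam (I k) (U ?C)\<bar> < e/8"
      using nxPP[of "I k"] UM[of ?C] Csub unfolding nxP_def NkS[symmetric] by blast
    show ?thesis using dec c1 c2 c3 by linarith
  qed
  have "(\<lambda>k. lam (I k) T) \<longlonglongrightarrow> 0"
    using LIMSEQ_subseq_LIMSEQ[OF H1[of "range q"] Imono] unfolding T_def by (simp add: comp_def)
  then have "eventually (\<lambda>k. \<bar>lam (I k) T\<bar> < e/4) sequentially"
    using e by (intro order_tendstoD(2)[OF tendsto_rabs_zero]) auto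
  then obtain k where "\<bar>lam (I k) T\<bar> < e/4" by (auto simp: eventually_sequentially)
  with big[of k] show False by linarith
qed

end


lemma weak_cont:
  assumes "h \<in> F"
  shows "continuous_map (weak_top M E F) euclideanreal (\<lambda>f. pairing M f h)"
proof -
  have sub: "\<Union>{{f \<in> E. pairing M f g \<in> U'} | g U'. g \<in> F \<and> open U'} \<subseteq> E"
    by (rule Union_least) blast
  have tW: "topspace (weak_top M E F) = E"
    unfolding weak_top_def topology_generated_by_topspace Union_insert using sub by (rule sup_absorb1)
  have op: "openin (weak_top M E F) {x \<in> E. pairing M x h \<in> U}" if "open U" for U
  proof -
    have *: "\<exists>g U'. {x \<in> E. pairing M x h \<in> U} = {f \<in> E. pairing M f g \<in> U'} \<and> g \<in> F \<and> open U'"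
      by (intro exI[of _ h] exI[of _ U]) (simp add: assms that)
    have "{x \<in> E. pairing M x h \<in> U} \<in> {{f \<in> E. pairing M f g \<in> U'} | g U'. g \<in> F \<and> open U'}"
      by (subst mem_Collect_eq) (rule *)
    then have "{x \<in> E. pairing M x h \<in> U} \<in> insert E {{f \<in> E. pairing M f g \<in> U'} | g U'. g \<in> F \<and> open U'}"
      by (rule insertI2)
    then show ?thesis unfolding weak_top_def by (rule topology_generated_by_Basis)
  qed
  show ?thesis unfolding continuous_map_def tW
    by (intro conjI allI impI) (simp_all add: op)
qed


lemma polar_L1:
  assumes "v \<in> polar M K" "f \<in> K" "K \<subseteq> borel_measurable M"
  shows "integrable M (\<lambda>x. f x * v x)" "(\<integral>x. \<bar>f x * v x\<bar> \<partial>M) \<le> 1"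
proof -
  have vb: "v \<in> borel_measurable M" and le: "(\<integral>\<^sup>+x. ennreal \<bar>f x * v x\<bar> \<partial>M) \<le> 1"
    using assms unfolding polar_def by auto
  have fb: "f \<in> borel_measurable M" using assms by auto
  have mb: "(\<lambda>x. f x * v x) \<in> borel_measurable M" using fb vb by measurable
  have le': "(\<integral>\<^sup>+x. ennreal (norm (f x * v x)) \<partial>M) \<le> 1" using le by simp
  have fin: "(\<integral>\<^sup>+x. ennreal (norm (f x * v x)) \<partial>M) < \<infinity>"
    using le_less_trans[OF le' ennreal_one_less_top] by simp
  show int: "integrable M (\<lambda>x. f x * v x)"
    by (rule integrableI_bounded[OF mb fin])
  have "(\<integral>\<^sup>+x. ennreal \<bar>f x * v x\<bar> \<partial>M) = ennreal (\<integral>x. \<bar>f x * v x\<bar> \<partial>M)"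
    using int by (intro nn_integral_eq_integral) auto
  then show "(\<integral>x. \<bar>f x * v x\<bar> \<partial>M) \<le> 1" using le by simp
qed

lemma E'_L1:
  assumes "g \<in> E'_K M K" "K \<subseteq> borel_measurable M"
  shows "\<exists>C\<ge>0. \<forall>f\<in>K. integrable M (\<lambda>x. f x * g x) \<and> (\<integral>x. \<bar>f x * g x\<bar> \<partial>M) \<le> C"
proof -
  from assms(1) obtain I :: "nat set" and c v where gb: "g \<in> borel_measurable M" and I: "finite I" "v ` I \<subseteq> polar M K"
    and ae: "AE x in M. g x = (\<Sum>i\<in>I. c i * v i x)"
    unfolding E'_K_def L0_span_def lin_span_def by blast
  define C where "C = (\<Sum>i\<in>I. \<bar>c i\<bar>)"
  have "C \<ge> 0" unfolding C_def by (intro sum_nonneg) auto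
  moreover have "integrable M (\<lambda>x. f x * g x) \<and> (\<integral>x. \<bar>f x * g x\<bar> \<partial>M) \<le> C" if f: "f \<in> K" for f
  proof -
    have vi: "integrable M (\<lambda>x. f x * v i x)" "(\<integral>x. \<bar>f x * v i x\<bar> \<partial>M) \<le> 1" if "i \<in> I" for i
      using polar_L1[of "v i" M K f] I that f assms(2) by auto
    have fb: "f \<in> borel_measurable M" using f assms(2) by auto
    define s where "s x = (\<Sum>i\<in>I. c i * (f x * v i x))" for x
    have sint: "integrable M s" unfolding s_def using vi by (intro Bochner_Integration.integrable_sum integrable_mult_right) auto
    have aes: "AE x in M. f x * g x = s x"
      using ae by eventually_elim (simp add: s_def sum_distrib_left mult_ac)
    have mb: "(\<lambda>x. f x * g x) \<in> borel_measurable M" using fb gb by measurable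
    have int: "integrable M (\<lambda>x. f x * g x)"
      using integrable_cong_AE[OF mb borel_measurable_integrable[OF sint] aes] sint by simp
    have "(\<integral>x. \<bar>f x * g x\<bar> \<partial>M) = (\<integral>x. \<bar>s x\<bar> \<partial>M)"
      using mb sint aes by (intro integral_cong_AE) auto
    also have "\<dots> \<le> (\<integral>x. (\<Sum>i\<in>I. \<bar>c i\<bar> * \<bar>f x * v i x\<bar>) \<partial>M)"
      unfolding s_def using vi
      by (intro Bochner_Integration.integral_mono Bochner_Integration.integrable_sum integrable_mult_right integrable_abs)
         (auto intro!: order_trans[OF sum_abs] simp: abs_mult)
    also have "\<dots> = (\<Sum>i\<in>I. \<bar>c i\<bar> * (\<integral>x. \<bar>f x * v i x\<bar> \<partial>M))"
      using vi by (subst Bochner_Integration.integral_sum) (auto intro!: integrable_mult_right integrable_abs)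
    also have "\<dots> \<le> (\<Sum>i\<in>I. \<bar>c i\<bar> * 1)"
      using vi by (intro sum_mono mult_left_mono) auto
    finally show ?thesis using int unfolding C_def by simp
  qed
  ultimately show ?thesis by blast
qed



theorem lemma5p8:
  fixes M :: "'a measure" and K :: "('a \<Rightarrow> real) set"
    and \<tau> :: "('a \<Rightarrow> real) topology" and F :: "('a \<Rightarrow> real) set"
  assumes "prob_space M" and "complete_measure M"
    and "ae_saturated M K"
    and "absolutely_convex K" and "closed_in_prob M K" and "bounded_in_prob M K"
    and "L0_topology M (E_K M K) \<tau>"
    and "locally_convex_top (E_K M K) \<tau>"
    and "equicontinuous_Koethe M K \<tau>"
    and "Krein_Smulian M K \<tau>"
    and "F_regular M K \<tau> F"
  shows "\<forall>g\<in>F. uniformly_integrable M {(\<lambda>x. f x * g x) | f. f \<in> K}"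
proof
  fix g assume g: "g \<in> F"
  have ind: "induces M K \<tau> F" using assms(11) unfolding F_regular_def by blast
  then have FE: "F \<subseteq> E'_K M K" and sol: "solid M F"
    and topeq0: "\<And>B. K_bounded K B \<Longrightarrow> subtopology \<tau> B = subtopology (weak_top M (E_K M K) F) B"
    unfolding induces_def by blast+
  have Kb: "K \<subseteq> borel_measurable M" using assms(3) unfolding ae_saturated_def by blast
  have gE: "g \<in> E'_K M K" using g FE by blast
  have gb: "g \<in> borel_measurable M" using gE unfolding E'_K_def L0_span_def by blast
  obtain C where C0: "C \<ge> 0" and CK: "\<And>f. f \<in> K \<Longrightarrow> integrable M (\<lambda>x. f x * g x) \<and> (\<integral>x. \<bar>f x * g x\<bar> \<partial>M) \<le> C"
    using E'_L1[OF gE Kb] by blast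
  define E where "E = E_K M K"
  define W where "W = weak_top M E F"
  define X where "X = subtopology W K"
  have KKb: "K_bounded K K"
    unfolding K_bounded_def scaleset_def
  proof (intro exI[of _ 1] conjI)
    show "K \<subseteq> {\<lambda>x. 1 * f x |f. f \<in> K}" by force
  qed simp
  have topeq: "subtopology \<tau> K = X" unfolding X_def W_def E_def by (rule topeq0[OF KKb])
  have compX: "compactin X K"
  proof -
    have "compactin \<tau> K" using assms(9) unfolding equicontinuous_Koethe_def by blast
    then have "compactin (subtopology \<tau> K) K" by (simp add: compactin_subtopology)
    then show ?thesis using topeq by simp
  qed
  have contX: "continuous_map X euclideanreal (\<lambda>f. nu M (\<lambda>x. f x * g x) A)" if A: "A \<in> sets M" for A
  proof -
    define ga where "ga x = indicator A x * g x" for x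
    have gab: "ga \<in> borel_measurable M" unfolding ga_def using gb A by measurable
    have "ga \<in> F" using sol g gab unfolding solid_def
    proof -
      have "AE x in M. \<bar>ga x\<bar> \<le> \<bar>g x\<bar>" unfolding ga_def by (intro AE_I2) (auto split: split_indicator)
      then show ?thesis using sol g gab unfolding solid_def by blast
    qed
    then have "continuous_map W euclideanreal (\<lambda>f. pairing M f ga)" unfolding W_def by (rule weak_cont)
    then have c: "continuous_map X euclideanreal (\<lambda>f. pairing M f ga)" unfolding X_def
      by (rule continuous_map_from_subtopology)
    have "pairing M f ga = nu M (\<lambda>x. f x * g x) A" for f
      unfolding pairing_def nu_def ga_def by (simp add: mult_ac)
    then show ?thesis using c by simp
  qed
  have dpcI: "dpc M X K (\<lambda>f x. f x * g x) C"
    by (rule dpc.intro[OF assms(1) compX]) (simp_all add: CK contX)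
  interpret dpc M X K "\<lambda>f x. f x * g x" C by (rule dpcI)
  have UAC: "\<forall>e>0. \<exists>d>0. \<forall>f\<in>K. \<forall>A\<in>sets M. measure M A < d \<longrightarrow> \<bar>nu M (\<lambda>x. f x * g x) A\<bar> \<le> e"
  proof (rule ccontr)
    assume "\<not> ?thesis"
    then obtain e where e: "e > 0"
      and neg: "\<forall>d>0. \<exists>f\<in>K. \<exists>A\<in>sets M. measure M A < d \<and> e < \<bar>nu M (\<lambda>x. f x * g x) A\<bar>"
      by (auto simp: not_le)
    obtain y D where yD: "\<forall>m. y m \<in> K" "\<forall>m. D m \<in> sets M" "disjoint_family D"
      "\<forall>m. 3*e/4 \<le> \<bar>nu M (\<lambda>x. y m x * g x) (D m)\<bar>"
      "\<forall>N. measure M (\<Union>m\<in>{N..}. D m) \<le> 2 * (1/4)^N"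
      using partA[OF e neg] by blast
    show False by (rule partB[OF e]) (use yD in auto)
  qed
  show "uniformly_integrable M {(\<lambda>x. f x * g x) | f. f \<in> K}"
    unfolding uniformly_integrable_def
  proof (intro allI impI)
    fix e :: real assume e: "e > 0"
    obtain d where d: "d > 0" and dP: "\<forall>f\<in>K. \<forall>A\<in>sets M. measure M A < d \<longrightarrow> \<bar>nu M (\<lambda>x. f x * g x) A\<bar> \<le> e/2"
      using UAC e by (meson half_gt_zero)
    define c where "c = 2 * C / d + 1"
    have "2 * C / d \<ge> 0" using C0 d by simp
    then have c0: "c > 0" unfolding c_def by linarith
    have Cc: "C / c < d"
    proof -
      have "C < d * c" unfolding c_def using C0 d by (simp add: algebra_simps)
      then show ?thesis using c0 by (simp add: divide_less_eq mult.commute)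
    qed
    show "\<exists>c. \<forall>h\<in>{(\<lambda>x. f x * g x) | f. f \<in> K}.
        (\<integral>\<^sup>+x\<in>{x \<in> space M. c < \<bar>h x\<bar>}. ennreal \<bar>h x\<bar> \<partial>M) \<le> ennreal e"
    proof (intro exI[of _ c] ballI)
      fix h assume "h \<in> {(\<lambda>x. f x * g x) | f. f \<in> K}"
      then obtain f where f: "f \<in> K" and hf: "h = (\<lambda>x. f x * g x)" by blast
      have int: "integrable M h" using CK[OF f] hf by simp
      have hb[measurable]: "h \<in> borel_measurable M" using int by auto
      have L1: "(\<integral>x. \<bar>h x\<bar> \<partial>M) \<le> C" using CK[OF f] hf by simp
      define A where "A = {x \<in> space M. c < \<bar>h x\<bar>}"
      have AM: "A \<in> sets M" unfolding A_def by measurable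
      have "measure M A \<le> measure M {x \<in> space M. \<bar>h x\<bar> \<ge> c}"
        unfolding A_def by (intro finite_measure.finite_measure_mono[OF fm]) auto
      also have "\<dots> \<le> (\<integral>x. \<bar>h x\<bar> \<partial>M) / c"
        using int c0 by (intro integral_Markov_inequality_measure[where A="space M"]) auto
      also have "\<dots> \<le> C / c" using L1 c0 by (simp add: divide_right_mono)
      finally have Am: "measure M A < d" using Cc by linarith
      define Ap where "Ap = A \<inter> {x \<in> space M. 0 \<le> h x}"
      define An where "An = A \<inter> {x \<in> space M. h x < 0}"
      have ApM: "Ap \<in> sets M" unfolding Ap_def using AM by measurable
      have AnM: "An \<in> sets M" unfolding An_def using AM by measurable
      have "measure M Ap \<le> measure M A" unfolding Ap_def
        by (intro finite_measure.finite_measure_mono[OF fm] AM) auto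
      then have "\<bar>nu M h Ap\<bar> \<le> e/2" using dP f ApM Am hf by auto
      moreover have "measure M An \<le> measure M A" unfolding An_def
        by (intro finite_measure.finite_measure_mono[OF fm] AM) auto
      then have "\<bar>nu M h An\<bar> \<le> e/2" using dP f AnM Am hf by auto
      moreover have "nu M (\<lambda>x. \<bar>h x\<bar>) A = nu M h Ap - nu M h An"
      proof -
        have "nu M (\<lambda>x. \<bar>h x\<bar>) A = (\<integral>x. indicator Ap x * h x - indicator An x * h x \<partial>M)"
          unfolding nu_def
          by (rule Bochner_Integration.integral_cong[OF refl]) (auto simp: A_def Ap_def An_def split: split_indicator)
        also have "\<dots> = nu M h Ap - nu M h An"
          unfolding nu_def using int ApM AnM by (intro Bochner_Integration.integral_diff) auto
        finally show ?thesis .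
      qed
      ultimately have nuA: "nu M (\<lambda>x. \<bar>h x\<bar>) A \<le> e" by linarith
      have "(\<integral>\<^sup>+x\<in>A. ennreal \<bar>h x\<bar> \<partial>M) = (\<integral>\<^sup>+x. ennreal (indicator A x * \<bar>h x\<bar>) \<partial>M)"
        by (intro nn_integral_cong) (auto split: split_indicator)
      also have "\<dots> = ennreal (nu M (\<lambda>x. \<bar>h x\<bar>) A)"
        unfolding nu_def using int AM by (intro nn_integral_eq_integral) auto
      also have "\<dots> \<le> ennreal e" using nuA by (rule ennreal_leI)
      finally show "(\<integral>\<^sup>+x\<in>{x \<in> space M. c < \<bar>h x\<bar>}. ennreal \<bar>h x\<bar> \<partial>M) \<le> ennreal e"
        unfolding A_def .
    qed
  qed
qed


end
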